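(* Let $\xi$ be a Hausdorff convergence. Then $\xi$ has countable $\mathrm{S}_0$-character if and only if $\mathrm{I}_1\xi$ is a pretopology and $\xi$ is sequential (i.e., $\xi\ge\mathrm{T}\mathrm{I}_1\xi$). Moreover, in this case $\mathrm{I}_1\xi$ is the only pretopology $\sigma$ of countable character satisfying $\sigma\ge\xi\ge\mathrm{T}\sigma$.
   Context: A convergence $\xi$ on a set $X$ is a relation between filters on $X$ and points, written $x\in\lim_\xi\mathcal{F}$, with $\mathcal{F}\le\mathcal{G}\Rightarrow\lim_\xi\mathcal{F}\subset\lim_\xi\mathcal{G}$ and $x\in\lim_\xi\{x\}^\uparrow$. For convergences on the same set, $\xi\ge\theta$ ($\xi$ finer) means $\lim_\xi\mathcal{F}\subset\lim_\theta\mathcal{F}$ for every filter $\mathcal{F}$. $\xi$ is Hausdorff if every filter has at most one limit point. Vicinity filter $\mathcal{V}_\xi(x)$: intersection of all filters converging to $x$; $\xi$ is a pretopology if $x\in\lim_\xi\mathcal{V}_\xi(x)$ for all $x$. A set $O$ is $\xi$-open if $\lim_\xi\mathcal{F}\cap O\ne\emptyset\Rightarrow O\in\mathcal{F}$; $\mathrm{T}\xi$ is the topology of $\xi$-open sets. $\mathrm{I}_1\xi$ is the convergence with $x\in\lim_{\mathrm{I}_1\xi}\mathcal{F}$ iff there is a filter $\mathcal{H}\le\mathcal{F}$ with a countable filter-base and $x\in\lim_\xi\mathcal{H}$; $\xi$ has countable character if $\xi=\mathrm{I}_1\xi$. $\xi$ is sequential if $\xi\ge\mathrm{T}\mathrm{I}_1\xi$.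 $\xi$ has countable $\mathrm{S}_0$-character if there is a pretopology $\sigma$ of countable character on the same set with $\sigma\ge\xi\ge\mathrm{T}\sigma$. *)

theory Defs
  imports Main "HOL-Library.Countable_Set"
begin

text \<open>A convergence on the type 'a (the whole type plays the role of the set X) is
  modelled as a map from filters to sets of limit points.  Filters in the paper are
  non-degenerate, so every notion below only looks at proper filters (F \<noteq> bot).
  Note: Isabelle's filter order is reversed w.r.t. the paper: paper F \<le> G
  (G finer) is Isabelle G \<le> F.\<close>

type_synonym 'a conv = "'a filter \<Rightarrow> 'a set"

definition is_convergence :: "'a conv \<Rightarrow> bool" where
  "is_convergence \<xi> \<longleftrightarrow>
     (\<forall>F G. F \<noteq> bot \<longrightarrow> G \<noteq> bot \<longrightarrow> G \<le> F \<longrightarrow> \<xi> F \<subseteq> \<xi> G) \<and>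
     (\<forall>x. x \<in> \<xi> (principal {x}))"

text \<open>\<xi> \<ge> \<theta> in the paper (\<xi> finer than \<theta>).\<close>
definition conv_finer :: "'a conv \<Rightarrow> 'a conv \<Rightarrow> bool" where
  "conv_finer \<xi> \<theta> \<longleftrightarrow> (\<forall>F. F \<noteq> bot \<longrightarrow> \<xi> F \<subseteq> \<theta> F)"

definition conv_eq :: "'a conv \<Rightarrow> 'a conv \<Rightarrow> bool" where
  "conv_eq \<xi> \<theta> \<longleftrightarrow> (\<forall>F. F \<noteq> bot \<longrightarrow> \<xi> F = \<theta> F)"

definition hausdorff_conv :: "'a conv \<Rightarrow> bool" where
  "hausdorff_conv \<xi> \<longleftrightarrow> (\<forall>F x y. F \<noteq> bot \<longrightarrow> x \<in> \<xi> F \<longrightarrow> y \<in> \<xi> F \<longrightarrow> x = y)"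

text \<open>Vicinity filter: intersection (= Sup in Isabelle's order) of all filters converging to x.\<close>
definition vicinity :: "'a conv \<Rightarrow> 'a \<Rightarrow> 'a filter" where
  "vicinity \<xi> x = Sup {F. F \<noteq> bot \<and> x \<in> \<xi> F}"

definition pretopology :: "'a conv \<Rightarrow> bool" where
  "pretopology \<xi> \<longleftrightarrow> (\<forall>x. x \<in> \<xi> (vicinity \<xi> x))"

definition conv_open :: "'a conv \<Rightarrow> 'a set \<Rightarrow> bool" where
  "conv_open \<xi> U \<longleftrightarrow> (\<forall>F. F \<noteq> bot \<longrightarrow> \<xi> F \<inter> U \<noteq> {} \<longrightarrow> eventually (\<lambda>y. y \<in> U) F)"

definition topologizer :: "'a conv \<Rightarrow> 'a conv" where
  "topologizer \<xi> F = {x. \<forall>U. conv_open \<xi> U \<longrightarrow> x \<in> U \<longrightarrow> eventually (\<lambda>y. y \<in> U) F}"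

definition countably_based :: "'a filter \<Rightarrow> bool" where
  "countably_based H \<longleftrightarrow>
     (\<exists>B. countable B \<and> (\<forall>A. eventually (\<lambda>x. x \<in> A) H \<longleftrightarrow> (\<exists>b\<in>B. b \<subseteq> A)))"

definition I1 :: "'a conv \<Rightarrow> 'a conv" where
  "I1 \<xi> F = {x. \<exists>H. H \<noteq> bot \<and> F \<le> H \<and> countably_based H \<and> x \<in> \<xi> H}"

definition countable_character :: "'a conv \<Rightarrow> bool" where
  "countable_character \<xi> \<longleftrightarrow> conv_eq \<xi> (I1 \<xi>)"

definition sequential_conv :: "'a conv \<Rightarrow> bool" where
  "sequential_conv \<xi> \<longleftrightarrow> conv_finer \<xi> (topologizer (I1 \<xi>))"

definition S0_witness :: "'a conv \<Rightarrow> 'a conv \<Rightarrow> bool" where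
  "S0_witness \<xi> \<sigma> \<longleftrightarrow> is_convergence \<sigma> \<and> pretopology \<sigma> \<and> countable_character \<sigma> \<and>
     conv_finer \<sigma> \<xi> \<and> conv_finer \<xi> (topologizer \<sigma>)"

definition countable_S0_character :: "'a conv \<Rightarrow> bool" where
  "countable_S0_character \<xi> \<longleftrightarrow> (\<exists>\<sigma>. S0_witness \<xi> \<sigma>)"

end

theory Submission
  imports Defs
begin

lemma cb_base:
  assumes "countably_based H"
  shows "\<exists>W :: nat \<Rightarrow> 'a set. (\<forall>n. eventually (\<lambda>x. x \<in> W n) H) \<and>
    (\<forall>A. eventually (\<lambda>x. x \<in> A) H \<longrightarrow> (\<exists>n. W n \<subseteq> A)) \<and> (\<forall>m n. m \<le> n \<longrightarrow> W n \<subseteq> W m)"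
proof -
  obtain B where B: "countable B" "\<And>A. eventually (\<lambda>x. x\<in>A) H \<longleftrightarrow> (\<exists>b\<in>B. b \<subseteq> A)"
    using assms unfolding countably_based_def by blast
  have "B \<noteq> {}" using B(2)[of UNIV] by auto
  define b where "b = from_nat_into B"
  have bB: "b n \<in> B" for n using from_nat_into[OF \<open>B\<noteq>{}\<close>] b_def by simp
  have surj: "\<forall>c\<in>B. \<exists>n. b n = c" using from_nat_into_surj[OF B(1)] b_def by blast
  define W where "W n = (\<Inter>i\<in>{..n}. b i)" for n
  have evb: "eventually (\<lambda>x. x \<in> b i) H" for i using B(2)[of "b i"] bB by blast
  have E1: "eventually (\<lambda>x. x \<in> W n) H" for n
  proof -
    have "eventually (\<lambda>x. \<forall>i\<in>{..n}. x \<in> b i) H"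
      by (rule eventually_ball_finite) (auto intro: evb)
    thus ?thesis unfolding W_def by simp
  qed
  have E2: "\<exists>n. W n \<subseteq> A" if "eventually (\<lambda>x. x\<in>A) H" for A
  proof -
    have "\<exists>c\<in>B. c \<subseteq> A" using that B(2)[of A] by simp
    then obtain c where c: "c\<in>B" "c \<subseteq> A" by (elim bexE)
    obtain n where n: "b n = c" using surj c(1) by (elim ballE exE) auto
    have "W n \<subseteq> b n" unfolding W_def by (rule INT_lower) simp
    then have "W n \<subseteq> A" using n c(2) by simp
    thus ?thesis by (rule exI)
  qed
  have E3: "W n \<subseteq> W m" if "m \<le> n" for m n unfolding W_def using that by auto
  show ?thesis by (rule exI[of _ W]) (use E1 E2 E3 in blast)
qed

lemma key:
  fixes \<xi> \<sigma> :: "'a conv"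
  assumes cx: "is_convergence \<xi>" and hx: "hausdorff_conv \<xi>" and cs: "is_convergence \<sigma>"
   and pt: "pretopology \<sigma>" and cc: "countable_character \<sigma>" and f1: "conv_finer \<sigma> \<xi>"
   and f2: "conv_finer \<xi> (topologizer \<sigma>)"
   and H: "H \<noteq> bot" "countably_based H" "x \<in> \<xi> H"
  shows "x \<in> \<sigma> H"
proof -
  have vic_ge: "principal {x} \<le> vicinity \<sigma> x"
    unfolding vicinity_def by (rule Sup_upper) (use cs in \<open>simp add: is_convergence_def principal_eq_bot_iff\<close>)
  have HV: "H \<le> vicinity \<sigma> x"
  proof (rule ccontr)
    assume "\<not> ?thesis"
    then obtain V where V1: "eventually V (vicinity \<sigma> x)" and V2: "\<not> eventually V H"
      unfolding le_filter_def by blast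
    obtain W :: "nat \<Rightarrow> 'a set" where W0: "(\<forall>n. eventually (\<lambda>x. x \<in> W n) H) \<and>
      (\<forall>A. eventually (\<lambda>x. x \<in> A) H \<longrightarrow> (\<exists>n. W n \<subseteq> A)) \<and> (\<forall>m n. m \<le> n \<longrightarrow> W n \<subseteq> W m)"
      using cb_base[OF H(2)] by blast
    have W: "\<And>n. eventually (\<lambda>x. x \<in> W n) H"
      "\<And>A. eventually (\<lambda>x. x \<in> A) H \<Longrightarrow> \<exists>n. W n \<subseteq> A" "\<And>m n. m \<le> n \<Longrightarrow> W n \<subseteq> W m"
      using W0 by auto
    have "\<exists>z. z \<in> W n \<and> \<not> V z" for n
    proof (rule ccontr)
      assume "\<not> ?thesis"
      then have "\<forall>z. z \<in> W n \<longrightarrow> V z" by blast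
      then have "eventually V H" using W(1)[of n] by (auto elim: eventually_mono)
      thus False using V2 by simp
    qed
    then have "\<forall>n. \<exists>z. z \<in> W n \<and> \<not> V z" by blast
    then have "\<exists>s. \<forall>n. s n \<in> W n \<and> \<not> V (s n)" by (rule choice)
    then obtain s where s0: "\<forall>n. s n \<in> W n \<and> \<not> V (s n)" by blast
    have s: "\<And>n. s n \<in> W n" "\<And>n. \<not> V (s n)" using s0 by auto
    define S where "S = filtermap s sequentially"
    have Snb: "S \<noteq> bot" by (simp add: S_def filtermap_bot_iff)
    have SH: "S \<le> H" unfolding le_filter_def S_def eventually_filtermap eventually_sequentially
    proof (intro allI impI)
      fix P assume "eventually P H"
      then have "eventually (\<lambda>x. x \<in> {z. P z}) H" by simp
      then obtain n where "W n \<subseteq> {z. P z}" using W(2) by blast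
      then show "\<exists>N. \<forall>m\<ge>N. P (s m)" using s(1) W(3) by blast
    qed
    have xS: "x \<in> \<xi> S" using cx Snb H SH unfolding is_convergence_def by blast
    have xT: "x \<in> topologizer \<sigma> S" using f2 Snb xS unfolding conv_finer_def by blast
    have Vx: "V x" using V1 vic_ge unfolding le_filter_def eventually_principal by blast
    have xU: "x \<in> - range s" using s(2) Vx by auto
    have op: "conv_open \<sigma> (- range s)"
      unfolding conv_open_def
    proof (intro allI impI)
      fix F :: "'a filter" assume Fnb: "F \<noteq> bot" and "\<sigma> F \<inter> - range s \<noteq> {}"
      then obtain y where yF: "y \<in> \<sigma> F" "y \<notin> range s" by blast
      have "y \<in> I1 \<sigma> F" using cc Fnb yF unfolding countable_character_def conv_eq_def by blast
      then obtain H' where H': "H' \<noteq> bot" "F \<le> H'" "countably_based H'" "y \<in> \<sigma> H'"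
        unfolding I1_def by blast
      obtain W' :: "nat \<Rightarrow> 'a set" where W'0: "(\<forall>n. eventually (\<lambda>x. x \<in> W' n) H') \<and>
        (\<forall>A. eventually (\<lambda>x. x \<in> A) H' \<longrightarrow> (\<exists>n. W' n \<subseteq> A)) \<and> (\<forall>m n. m \<le> n \<longrightarrow> W' n \<subseteq> W' m)"
        using cb_base[OF H'(3)] by blast
      have W': "\<And>n. eventually (\<lambda>x. x \<in> W' n) H'"
        "\<And>A. eventually (\<lambda>x. x \<in> A) H' \<Longrightarrow> \<exists>n. W' n \<subseteq> A" "\<And>m n. m \<le> n \<Longrightarrow> W' n \<subseteq> W' m"
        using W'0 by auto
      have "eventually (\<lambda>z. z \<in> - range s) H'"
      proof (cases "\<forall>k m. \<exists>n\<ge>m. s n \<in> W' k")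
        case True
        then have "\<forall>k. \<exists>g. \<forall>m. g m \<ge> m \<and> s (g m) \<in> W' k"
          by (intro allI choice) blast
        then have "\<exists>f. \<forall>k. \<forall>m. f k m \<ge> m \<and> s (f k m) \<in> W' k" by (rule choice)
        then obtain f where f0: "\<forall>k m. f k m \<ge> m \<and> s (f k m) \<in> W' k" by blast
        have f: "\<And>k m. f k m \<ge> m \<and> s (f k m) \<in> W' k" using f0 by blast
        define nk where "nk = rec_nat (f 0 0) (\<lambda>k r. f (Suc k) (Suc r))"
        have nk0: "nk 0 = f 0 0" and nkS: "nk (Suc k) = f (Suc k) (Suc (nk k))" for k
          by (simp_all add: nk_def)
        have nkW: "s (nk k) \<in> W' k" for k by (cases k) (use f in \<open>auto simp: nk0 nkS\<close>)
        have nkmono: "strict_mono nk"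
          unfolding strict_mono_Suc_iff
        proof
          fix k show "nk k < nk (Suc k)" using f[of "Suc (nk k)" "Suc k"] by (simp add: nkS)
        qed
        have nkge: "k \<le> nk k" for k using strict_mono_imp_increasing[OF nkmono] .
        define G where "G = filtermap (s \<circ> nk) sequentially"
        have Gnb: "G \<noteq> bot" by (simp add: G_def filtermap_bot_iff)
        have GH': "G \<le> H'" unfolding le_filter_def G_def eventually_filtermap eventually_sequentially
        proof (intro allI impI)
          fix P assume "eventually P H'"
          then have "eventually (\<lambda>x. x \<in> {z. P z}) H'" by simp
          then obtain k where "W' k \<subseteq> {z. P z}" using W'(2) by blast
          then have kk: "\<forall>m\<ge>k. P ((s \<circ> nk) m)"
          proof (intro allI impI)
            fix m assume "W' k \<subseteq> {z. P z}" "k \<le> m"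
            then have "s (nk m) \<in> W' k" using nkW[of m] W'(3)[of k m] by blast
            then show "P ((s \<circ> nk) m)" using \<open>W' k \<subseteq> {z. P z}\<close> by auto
          qed
          then show "\<exists>N. \<forall>m\<ge>N. P ((s \<circ> nk) m)" by blast
        qed
        have GS: "G \<le> S" unfolding le_filter_def G_def S_def eventually_filtermap eventually_sequentially
        proof (intro allI impI)
          fix P assume "\<exists>N. \<forall>n\<ge>N. P (s n)"
          then obtain N where "\<forall>n\<ge>N. P (s n)" by blast
          then have "\<forall>m\<ge>N. P ((s \<circ> nk) m)"
            using nkge by (auto intro: le_trans)
          then show "\<exists>N. \<forall>m\<ge>N. P ((s \<circ> nk) m)" by blast
        qed
        have "y \<in> \<sigma> G" using cs Gnb H'(1) GH' H'(4) unfolding is_convergence_def by blast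
        then have yG: "y \<in> \<xi> G" using f1 Gnb unfolding conv_finer_def by blast
        have xG: "x \<in> \<xi> G" using cx Gnb Snb GS xS unfolding is_convergence_def by blast
        have "y = x" using hx Gnb yG xG unfolding hausdorff_conv_def by blast
        then have "H' \<le> vicinity \<sigma> x" using H'(1,4) unfolding vicinity_def by (auto intro: Sup_upper)
        then have "eventually V H'" using V1 filter_leD by blast
        then have "eventually V G" using GH' filter_leD by blast
        then obtain N where "\<forall>n\<ge>N. V (s (nk n))"
          unfolding G_def eventually_filtermap eventually_sequentially by auto
        then show ?thesis using s(2) by blast
      next
        case False
        then obtain k m where km: "\<And>n. n \<ge> m \<Longrightarrow> s n \<notin> W' k" by auto
        have ev: "eventually (\<lambda>z. z \<noteq> s i) H'" for i
        proof (rule ccontr)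
          assume nev: "\<not> ?thesis"
          have "principal {s i} \<le> H'" unfolding le_filter_def eventually_principal
          proof (intro allI impI)
            fix P assume PH: "eventually P H'"
            show "\<forall>z\<in>{s i}. P z"
            proof (rule ccontr)
              assume "\<not> (\<forall>z\<in>{s i}. P z)"
              then have "\<not> P (s i)" by simp
              then have "eventually (\<lambda>z. z \<noteq> s i) H'" using PH by (auto elim: eventually_mono)
              thus False using nev by simp
            qed
          qed
          moreover have pnb: "principal {s i} \<noteq> bot" by (simp add: principal_eq_bot_iff)
          ultimately have "\<sigma> H' \<subseteq> \<sigma> (principal {s i})" using cs H'(1) unfolding is_convergence_def by blast
          then have "y \<in> \<sigma> (principal {s i})" using H'(4) by blast
          then have "y \<in> \<xi> (principal {s i})" using f1 pnb unfolding conv_finer_def by blast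
          moreover have "s i \<in> \<xi> (principal {s i})" using cx unfolding is_convergence_def by blast
          ultimately have "y = s i" using hx pnb unfolding hausdorff_conv_def by blast
          thus False using yF(2) by auto
        qed
        have "eventually (\<lambda>z. \<forall>i\<in>{..<m}. z \<noteq> s i) H'"
          by (rule eventually_ball_finite) (auto intro: ev)
        moreover have "eventually (\<lambda>z. z \<in> W' k) H'" by (rule W'(1))
        ultimately show ?thesis
        proof (rule eventually_elim2)
          fix z assume a: "\<forall>i\<in>{..<m}. z \<noteq> s i" and b: "z \<in> W' k"
          show "z \<in> - range s"
          proof
            assume "z \<in> range s"
            then obtain n where "z = s n" by blast
            then show False using a b km[of n] by (cases "n < m") auto
          qed
        qed
      qed
      then show "eventually (\<lambda>y. y \<in> - range s) F" using H'(2) filter_leD by blast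
    qed
    have "eventually (\<lambda>y. y \<in> - range s) S" using xT xU op unfolding topologizer_def by blast
    then show False unfolding S_def eventually_filtermap eventually_sequentially by auto
  qed
  have "x \<in> \<sigma> (vicinity \<sigma> x)" using pt unfolding pretopology_def by blast
  moreover have "vicinity \<sigma> x \<noteq> bot" using vic_ge by (auto simp: bot_unique principal_eq_bot_iff)
  ultimately show ?thesis using cs H(1) HV unfolding is_convergence_def by blast
qed

lemma vic_nb: "is_convergence \<sigma> \<Longrightarrow> vicinity \<sigma> x \<noteq> bot"
proof
  assume "is_convergence \<sigma>" "vicinity \<sigma> x = bot"
  moreover have "principal {x} \<le> vicinity \<sigma> x"
    unfolding vicinity_def by (rule Sup_upper) (use \<open>is_convergence \<sigma>\<close> in \<open>simp add: is_convergence_def principal_eq_bot_iff\<close>)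
  ultimately show False by (simp add: bot_unique principal_eq_bot_iff)
qed

lemma eq_vicinity: "conv_eq \<sigma> \<tau> \<Longrightarrow> vicinity \<sigma> x = vicinity \<tau> x"
proof -
  assume a: "conv_eq \<sigma> \<tau>"
  have "{F. F \<noteq> bot \<and> x \<in> \<sigma> F} = {F. F \<noteq> bot \<and> x \<in> \<tau> F}" using a unfolding conv_eq_def by auto
  thus ?thesis unfolding vicinity_def by simp
qed

lemma eq_open: "conv_eq \<sigma> \<tau> \<Longrightarrow> conv_open \<sigma> = conv_open \<tau>"
  unfolding conv_eq_def conv_open_def by (intro ext) auto

lemma eq_top: assumes "conv_eq \<sigma> \<tau>" shows "topologizer \<sigma> = topologizer \<tau>"
  using eq_open[OF assms] unfolding topologizer_def by simp

lemma eq_I1: "conv_eq \<sigma> \<tau> \<Longrightarrow> I1 \<sigma> = I1 \<tau>"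
  unfolding conv_eq_def I1_def by (intro ext) auto

lemma S0_cong:
  assumes e: "conv_eq \<sigma> \<tau>" and w: "S0_witness \<xi> \<sigma>"
  shows "S0_witness \<xi> \<tau>"
proof -
  have c: "is_convergence \<sigma>" "pretopology \<sigma>" "countable_character \<sigma>" "conv_finer \<sigma> \<xi>"
    "conv_finer \<xi> (topologizer \<sigma>)" using w unfolding S0_witness_def by auto
  have e': "\<And>F. F \<noteq> bot \<Longrightarrow> \<sigma> F = \<tau> F" using e unfolding conv_eq_def by auto
  have "is_convergence \<tau>" unfolding is_convergence_def
  proof (intro conjI allI impI)
    fix F G :: "'a filter" assume "F \<noteq> bot" "G \<noteq> bot" "G \<le> F"
    then have "\<sigma> F \<subseteq> \<sigma> G" using c(1) unfolding is_convergence_def by blast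
    then show "\<tau> F \<subseteq> \<tau> G" using e'[OF \<open>F \<noteq> bot\<close>] e'[OF \<open>G \<noteq> bot\<close>] by simp
  next
    fix x :: 'a
    have "principal {x} \<noteq> bot" by (simp add: principal_eq_bot_iff)
    then show "x \<in> \<tau> (principal {x})" using c(1) e'[of "principal {x}"] unfolding is_convergence_def by auto
  qed
  moreover have "pretopology \<tau>" using c(2) e' vic_nb[OF c(1)] eq_vicinity[OF e]
    unfolding pretopology_def by metis
  moreover have "countable_character \<tau>" using c(3) e' eq_I1[OF e]
    unfolding countable_character_def conv_eq_def by metis
  moreover have "conv_finer \<tau> \<xi>" using c(4) e' unfolding conv_finer_def by metis
  moreover have "conv_finer \<xi> (topologizer \<tau>)" using c(5) eq_top[OF e] by simp
  ultimately show ?thesis unfolding S0_witness_def by simp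
qed

lemma witness_eq:
  assumes cx: "is_convergence \<xi>" and hx: "hausdorff_conv \<xi>" and w: "S0_witness \<xi> \<sigma>"
  shows "conv_eq \<sigma> (I1 \<xi>)"
proof -
  have c: "is_convergence \<sigma>" "pretopology \<sigma>" "countable_character \<sigma>" "conv_finer \<sigma> \<xi>"
    "conv_finer \<xi> (topologizer \<sigma>)" using w unfolding S0_witness_def by auto
  show ?thesis unfolding conv_eq_def
  proof (intro allI impI equalityI subsetI)
    fix F y assume Fnb: "F \<noteq> bot" and "y \<in> \<sigma> F"
    then have "y \<in> I1 \<sigma> F" using c(3) unfolding countable_character_def conv_eq_def by blast
    then obtain H where H: "H \<noteq> bot" "F \<le> H" "countably_based H" "y \<in> \<sigma> H" unfolding I1_def by blast
    then have "y \<in> \<xi> H" using c(4) unfolding conv_finer_def by blast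
    then show "y \<in> I1 \<xi> F" using H unfolding I1_def by blast
  next
    fix F y assume Fnb: "F \<noteq> bot" and "y \<in> I1 \<xi> F"
    then obtain H where H: "H \<noteq> bot" "F \<le> H" "countably_based H" "y \<in> \<xi> H" unfolding I1_def by blast
    have "y \<in> \<sigma> H" by (rule key[OF cx hx c H(1,3,4)])
    then show "y \<in> \<sigma> F" using c(1) H Fnb unfolding is_convergence_def by blast
  qed
qed

lemma I1_witness:
  assumes cx: "is_convergence \<xi>" and p: "pretopology (I1 \<xi>)" and sq: "sequential_conv \<xi>"
  shows "S0_witness \<xi> (I1 \<xi>)"
proof -
  have "is_convergence (I1 \<xi>)" unfolding is_convergence_def
  proof (intro conjI allI impI)
    fix F G :: "'a filter" assume "F \<noteq> bot" "G \<noteq> bot" "G \<le> F"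
    then show "I1 \<xi> F \<subseteq> I1 \<xi> G" unfolding I1_def using order_trans by blast
  next
    fix x :: 'a
    have "countably_based (principal {x})" unfolding countably_based_def
      by (intro exI[of _ "{{x}}"]) (auto simp: eventually_principal)
    then show "x \<in> I1 \<xi> (principal {x})" using cx unfolding I1_def is_convergence_def
      by (intro CollectI exI[of _ "principal {x}"]) (auto simp: principal_eq_bot_iff)
  qed
  moreover have "countable_character (I1 \<xi>)" unfolding countable_character_def conv_eq_def
  proof (intro allI impI equalityI subsetI)
    fix F x assume "F \<noteq> bot" "x \<in> I1 \<xi> F"
    then obtain H where H: "H \<noteq> bot" "F \<le> H" "countably_based H" "x \<in> \<xi> H" unfolding I1_def by blast
    then have "x \<in> I1 \<xi> H" unfolding I1_def by blast
    then show "x \<in> I1 (I1 \<xi>) F" using H unfolding I1_def by blast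
  next
    fix F x assume "F \<noteq> bot" "x \<in> I1 (I1 \<xi>) F"
    then obtain H where H: "H \<noteq> bot" "F \<le> H" "x \<in> I1 \<xi> H" unfolding I1_def by blast
    then obtain H2 where "H2 \<noteq> bot" "H \<le> H2" "countably_based H2" "x \<in> \<xi> H2" unfolding I1_def by blast
    then show "x \<in> I1 \<xi> F" using H order_trans unfolding I1_def by blast
  qed
  moreover have "conv_finer (I1 \<xi>) \<xi>" unfolding conv_finer_def
  proof (intro allI impI subsetI)
    fix F x assume "F \<noteq> bot" "x \<in> I1 \<xi> F"
    then obtain H where H: "H \<noteq> bot" "F \<le> H" "x \<in> \<xi> H" unfolding I1_def by blast
    then show "x \<in> \<xi> F" using cx \<open>F \<noteq> bot\<close> unfolding is_convergence_def by blast
  qed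
  ultimately show ?thesis using p sq unfolding S0_witness_def sequential_conv_def by simp
qed

theorem proposition2p7:
  fixes \<xi> :: "'a conv"
  assumes "is_convergence \<xi>" and "hausdorff_conv \<xi>"
  shows "(countable_S0_character \<xi> \<longleftrightarrow> pretopology (I1 \<xi>) \<and> sequential_conv \<xi>) \<and>
         (countable_S0_character \<xi> \<longrightarrow> (\<forall>\<sigma>. S0_witness \<xi> \<sigma> \<longleftrightarrow> conv_eq \<sigma> (I1 \<xi>)))"
proof -
  have A: "S0_witness \<xi> (I1 \<xi>)" if cs0: "countable_S0_character \<xi>"
  proof -
    obtain \<sigma> where w: "S0_witness \<xi> \<sigma>" using cs0 unfolding countable_S0_character_def by blast
    show ?thesis by (rule S0_cong[OF witness_eq[OF assms w] w])
  qed
  have eqsym: "conv_eq \<tau> \<sigma>" if "conv_eq \<sigma> \<tau>" for \<sigma> \<tau> :: "'a conv"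
    using that unfolding conv_eq_def by auto
  have P1: "countable_S0_character \<xi> \<longleftrightarrow> pretopology (I1 \<xi>) \<and> sequential_conv \<xi>"
  proof
    assume "countable_S0_character \<xi>"
    then have "S0_witness \<xi> (I1 \<xi>)" by (rule A)
    then show "pretopology (I1 \<xi>) \<and> sequential_conv \<xi>"
      unfolding S0_witness_def sequential_conv_def by simp
  next
    assume "pretopology (I1 \<xi>) \<and> sequential_conv \<xi>"
    then show "countable_S0_character \<xi>" unfolding countable_S0_character_def
      using I1_witness[OF assms(1)] by blast
  qed
  have P2: "S0_witness \<xi> \<sigma> \<longleftrightarrow> conv_eq \<sigma> (I1 \<xi>)" if c0: "countable_S0_character \<xi>" for \<sigma>
  proof
    assume "S0_witness \<xi> \<sigma>"
    then show "conv_eq \<sigma> (I1 \<xi>)" by (rule witness_eq[OF assms])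
  next
    assume "conv_eq \<sigma> (I1 \<xi>)"
    then show "S0_witness \<xi> \<sigma>" using A[OF c0] S0_cong eqsym by blast
  qed
  show ?thesis using P1 P2 by blast
qed

end
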